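(* Let $h=h_{\mathbb{B}^n}$ be the Hilbert distance in the unit ball $\mathbb{B}^n\subset\mathbb{R}^n$, let $c\in\mathbb{B}^n$ and $R>0$, and let $S_h(c,R)=\{x\in\mathbb{B}^n:h_{\mathbb{B}^n}(x,c)=R\}$. Then $S_h(c,R)$ is an ellipsoid of revolution with center \[ c'=\frac{c}{\mathrm{ch}^2(R/2)-|c|^2\,\mathrm{sh}^2(R/2)}, \] whose semi-axis in the direction of $c$ (the minor semi-axis) equals \[ a_{\min}=\frac12\,\frac{(1-|c|^2)\,\mathrm{sh}(R)}{\mathrm{ch}^2(R/2)-|c|^2\,\mathrm{sh}^2(R/2)} \] and every other semi-axis equals \[ a_{\max}=\frac{\mathrm{sh}(R/2)\sqrt{1-|c|^2}}{\sqrt{\mathrm{ch}^2(R/2)-|c|^2\,\mathrm{sh}^2(R/2)}}. \] If $c=0$, then $S_h(c,R)$ is the Euclidean sphere centered at $0$ with radius $\mathrm{th}(R/2)$.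
   Context: Hilbert metric: for distinct $x,y$ in a bounded convex domain $G\subset\mathbb{R}^n$, let $u,v$ be the intersection points of the line through $x,y$ with $\partial G$, ordered $u,x,y,v$ on the line; $h_G(x,y)=\log\frac{|u-y||x-v|}{|u-x||y-v|}$. $\mathrm{sh},\mathrm{ch},\mathrm{th}$ denote the hyperbolic sine, cosine and tangent. *)

theory Defs
  imports "HOL-Analysis.Analysis"
begin

text \<open>For distinct x, y in G, the
  line through x and y meets the boundary in u and v, ordered u, x, y, v:
  u lies on the ray from y through x beyond x, v lies on the ray from x
  through y beyond y.\<close>

definition hilbert_u :: "'a::real_normed_vector set \<Rightarrow> 'a \<Rightarrow> 'a \<Rightarrow> 'a" where
  "hilbert_u G x y = (THE u. u \<in> frontier G \<and> (\<exists>t>0. u = x + t *\<^sub>R (x - y)))"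

definition hilbert_dist :: "'a::real_normed_vector set \<Rightarrow> 'a \<Rightarrow> 'a \<Rightarrow> real" where
  "hilbert_dist G x y =
     (if x = y then 0
      else (let u = hilbert_u G x y; v = hilbert_u G y x in
            ln ((norm (u - y) * norm (x - v)) / (norm (u - x) * norm (y - v)))))"

text \<open>Ellipsoid of revolution with center p, symmetry axis along the unit vector e,
  semi-axis a in direction e and semi-axis b in every direction orthogonal to e.\<close>

definition ellipsoid_rev :: "'a::real_inner \<Rightarrow> 'a \<Rightarrow> real \<Rightarrow> real \<Rightarrow> 'a set" where
  "ellipsoid_rev p e a b =
     {x. ((x - p) \<bullet> e)\<^sup>2 / a\<^sup>2 + ((norm (x - p))\<^sup>2 - ((x - p) \<bullet> e)\<^sup>2) / b\<^sup>2 = 1}"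

end

theory Submission
  imports Defs
begin


lemma vieta:
  fixes X P K al t t' :: real
  assumes al: "al = X - 2*P + K" and "al > 0" and "t > 0" and "t' > 0"
    and E1: "al*t^2 + 2*t*(X - P) + X - 1 = 0"
    and E2: "al*t'^2 + 2*t'*(K - P) + K - 1 = 0"
  shows "al*t*(1+t') = 1 - X \<and> al*t'*(1+t) = 1 - K"
proof -
  define Q where "Q = (\<lambda>r::real. al*r^2 + 2*(P-X)*r + X - 1)"
  have q1: "Q (-t) = 0" using E1 unfolding Q_def by (simp add: algebra_simps power2_eq_square)
  have q2: "Q (1+t') = 0" using E2 unfolding Q_def al by (simp add: algebra_simps power2_eq_square)
  have "Q (-t) - Q (1+t') = (-t - (1+t')) * (al*(-t + (1+t')) + 2*(P-X))"
    unfolding Q_def by (simp add: algebra_simps power2_eq_square)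
  hence "al*(-t + (1+t')) + 2*(P-X) = 0" using q1 q2 \<open>t>0\<close> \<open>t'>0\<close> by simp
  hence s: "2*(P-X) = - al*(1+t'-t)" by (simp add: algebra_simps)
  have r1: "al*t*(1+t') = 1 - X" using q1 unfolding Q_def s by (simp add: algebra_simps power2_eq_square)
  have "al*t'*(1+t) - al*t*(1+t') = al*(1+t'-t) - al" by (simp add: algebra_simps)
  moreover have "al*(1+t'-t) = 2*(X-P)" using s by (simp add: algebra_simps)
  ultimately have "al*t'*(1+t) = (1-X) + 2*(X-P) - al" using r1 by (simp add: algebra_simps)
  hence "al*t'*(1+t) = 1 - K" unfolding al by simp
  with r1 show ?thesis by simp
qed

lemma norm_line_sq:
  fixes x y :: "'a::real_inner"
  shows "(norm (x + t *\<^sub>R (x - y)))^2 = (norm (x-y))^2 * t^2 + 2*t*(x\<bullet>x - x\<bullet>y) + x\<bullet>x"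
  unfolding power2_norm_eq_inner by (simp add: inner_add_left inner_add_right inner_diff_left inner_diff_right
      algebra_simps inner_commute power2_eq_square)

lemma quad_root:
  fixes al be ga :: real
  assumes "al > 0" "ga > 0"
  shows "\<exists>!t. t > 0 \<and> al*t^2 + be*t - ga = 0"
proof -
  define r where "r = sqrt (be^2 + 4*al*ga)"
  have r2: "r^2 = be^2 + 4*al*ga" unfolding r_def using assms by (simp add: add_nonneg_nonneg)
  have "sqrt (be^2) < r" unfolding r_def using assms by (intro real_sqrt_less_mono) simp
  hence "r > \<bar>be\<bar>" by simp
  hence pos: "r - be > 0" by linarith
  define t0 where "t0 = (r - be)/(2*al)"
  have t0p: "t0 > 0" unfolding t0_def using pos assms by simp
  have "al*t0^2 + be*t0 = ((r-be)^2 + 2*be*(r-be))/(4*al)"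
    unfolding t0_def using assms by (simp add: field_simps power2_eq_square)
  also have "\<dots> = (r^2 - be^2)/(4*al)" by (simp add: algebra_simps power2_eq_square)
  also have "\<dots> = ga" using r2 assms by simp
  finally have h0: "al*t0^2 + be*t0 - ga = 0" by simp
  have uniq: "t = t0" if t: "t > 0" "al*t^2 + be*t - ga = 0" for t
  proof (rule ccontr)
    assume ne: "t \<noteq> t0"
    have "(t - t0) * (al*(t+t0) + be) = (al*t^2 + be*t - ga) - (al*t0^2 + be*t0 - ga)"
      by (simp add: algebra_simps power2_eq_square)
    hence "al*(t+t0) + be = 0" using t h0 ne by simp
    hence "be + al*t = - al*t0" by (simp add: algebra_simps)
    moreover have "ga = t*(be + al*t)" using t(2) by (simp add: algebra_simps power2_eq_square)
    ultimately have "ga = - al*t*t0" by simp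
    moreover have "al*t*t0 > 0" using assms t t0p by simp
    ultimately show False using assms by linarith
  qed
  show ?thesis using t0p h0 uniq by blast
qed

lemma norm_sq_less1: "norm (x::'a::real_normed_vector) < 1 \<Longrightarrow> (norm x)^2 < 1"
  using power_strict_mono[of "norm x" 1 2] by simp

lemma hilbert_u_ball:
  fixes x y :: "'a::euclidean_space"
  assumes "norm x < 1" "norm y < 1" "x \<noteq> y"
  shows "\<exists>t>0. hilbert_u (ball 0 1) x y = x + t *\<^sub>R (x - y) \<and> norm (x + t *\<^sub>R (x - y)) = 1"
proof -
  define al where "al = (norm (x-y))^2"
  have al: "al > 0" using assms unfolding al_def by simp
  have ga: "1 - x\<bullet>x > 0" using norm_sq_less1[OF assms(1)] by (simp add: power2_norm_eq_inner)
  have eq: "norm (x + t *\<^sub>R (x - y)) = 1 \<longleftrightarrow> al*t^2 + (2*(x\<bullet>x - x\<bullet>y))*t - (1 - x\<bullet>x) = 0" for t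
  proof -
    have "norm (x + t *\<^sub>R (x - y)) = 1 \<longleftrightarrow> (norm (x + t *\<^sub>R (x - y)))^2 = 1"
      by (metis norm_ge_zero power_one real_root_pos2 real_sqrt_abs abs_norm_cancel real_sqrt_one power2_eq_1_iff)
    also have "\<dots> \<longleftrightarrow> al*t^2 + (2*(x\<bullet>x - x\<bullet>y))*t - (1 - x\<bullet>x) = 0"
      unfolding norm_line_sq al_def by (auto simp: algebra_simps)
    finally show ?thesis .
  qed
  from quad_root[OF al ga, of "2*(x\<bullet>x - x\<bullet>y)"]
  obtain t0 where t0: "t0 > 0" "norm (x + t0 *\<^sub>R (x - y)) = 1"
    and un: "\<And>t. t > 0 \<Longrightarrow> norm (x + t *\<^sub>R (x - y)) = 1 \<Longrightarrow> t = t0"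
    using eq by metis
  have ex1: "\<exists>!u. u \<in> frontier (ball 0 1) \<and> (\<exists>t>0. u = x + t *\<^sub>R (x - y))"
  proof
    show "x + t0 *\<^sub>R (x - y) \<in> frontier (ball 0 1) \<and> (\<exists>t>0. x + t0 *\<^sub>R (x - y) = x + t *\<^sub>R (x - y))"
      using t0 by auto
  next
    fix u assume "u \<in> frontier (ball 0 1) \<and> (\<exists>t>0. u = x + t *\<^sub>R (x - y))"
    then obtain t where "t > 0" "u = x + t *\<^sub>R (x - y)" "norm u = 1" by auto
    thus "u = x + t0 *\<^sub>R (x - y)" using un by blast
  qed
  have "hilbert_u (ball 0 1) x y \<in> frontier (ball 0 1) \<and> (\<exists>t>0. hilbert_u (ball 0 1) x y = x + t *\<^sub>R (x - y))"
    unfolding hilbert_u_def by (rule theI'[OF ex1])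
  then obtain t where "t > 0" "hilbert_u (ball 0 1) x y = x + t *\<^sub>R (x - y)" "norm (hilbert_u (ball 0 1) x y) = 1"
    by auto
  thus ?thesis by auto
qed

lemma hilbert_dist_ball:
  fixes x c :: "'a::euclidean_space"
  assumes "norm x < 1" "norm c < 1" "x \<noteq> c"
  shows "\<exists>t t'. t>0 \<and> t'>0 \<and> hilbert_dist (ball 0 1) x c = ln ((1+t)*(1+t')/(t*t'))
     \<and> (norm (x-c))^2*t*(1+t') = 1 - x\<bullet>x \<and> (norm (x-c))^2*t'*(1+t) = 1 - c\<bullet>c"
proof -
  obtain t where t: "t > 0" "hilbert_u (ball 0 1) x c = x + t *\<^sub>R (x - c)" "norm (x + t *\<^sub>R (x - c)) = 1"
    using hilbert_u_ball[OF assms(1,2,3)] by blast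
  obtain t' where t': "t' > 0" "hilbert_u (ball 0 1) c x = c + t' *\<^sub>R (c - x)" "norm (c + t' *\<^sub>R (c - x)) = 1"
    using hilbert_u_ball[OF assms(2,1)] assms(3) by metis
  define n where "n = norm (x - c)"
  have n: "n > 0" using assms(3) unfolding n_def by simp
  have e1: "x + t *\<^sub>R (x - c) - c = (1+t) *\<^sub>R (x - c)" by (simp add: algebra_simps)
  have e2: "x - (c + t' *\<^sub>R (c - x)) = (1+t') *\<^sub>R (x - c)" by (simp add: algebra_simps)
  have e3: "x + t *\<^sub>R (x - c) - x = t *\<^sub>R (x - c)" by simp
  have e4: "c - (c + t' *\<^sub>R (c - x)) = t' *\<^sub>R (x - c)" by (simp add: algebra_simps)
  have hd: "hilbert_dist (ball 0 1) x c = ln (((1+t)*n) * ((1+t')*n) / ((t*n) * (t'*n)))"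
    unfolding hilbert_dist_def Let_def t(2) t'(2) e1 e2 e3 e4 using assms(3) t(1) t'(1)
    by (simp add: n_def)
  have "((1+t)*n) * ((1+t')*n) / ((t*n) * (t'*n)) = (1+t)*(1+t')/(t*t')"
    using n t(1) t'(1) by (simp add: field_simps)
  with hd have hd': "hilbert_dist (ball 0 1) x c = ln ((1+t)*(1+t')/(t*t'))" by simp
  define al where "al = (norm (x-c))^2"
  have al: "al = x\<bullet>x - 2*(x\<bullet>c) + c\<bullet>c" unfolding al_def power2_norm_eq_inner
    by (simp add: inner_diff_left inner_diff_right inner_commute)
  have alp: "al > 0" unfolding al_def using assms(3) by simp
  have E1: "al*t^2 + 2*t*(x\<bullet>x - x\<bullet>c) + x\<bullet>x - 1 = 0"
    using norm_line_sq[of x t c] t(3) unfolding al_def by (simp add: algebra_simps)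
  have E2: "al*t'^2 + 2*t'*(c\<bullet>c - x\<bullet>c) + c\<bullet>c - 1 = 0"
    using norm_line_sq[of c t' x] t'(3) unfolding al_def
    by (simp add: algebra_simps norm_minus_commute inner_commute)
  have "al*t*(1+t') = 1 - x\<bullet>x \<and> al*t'*(1+t) = 1 - c\<bullet>c"
    by (rule vieta[OF al alp t(1) t'(1) E1 E2])
  thus ?thesis using hd' t(1) t'(1) unfolding al_def by blast
qed

lemma cosh_half_sq: "4 * (cosh ((R::real)/2))^2 = exp R + exp (-R) + 2"
proof -
  have "exp (R/2) * exp (R/2) = exp R" by (simp flip: exp_add)
  moreover have "exp (-(R/2)) * exp (-(R/2)) = exp (-R)" by (simp flip: exp_add)
  moreover have "exp (R/2) * exp (-(R/2)) = 1" by (simp flip: exp_add)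
  ultimately show ?thesis unfolding cosh_field_def by (simp add: power2_eq_square algebra_simps)
qed

lemma recip_inj:
  fixes r q :: real
  assumes "r > 1" "q > 1"
  shows "r + 1/r = q + 1/q \<longleftrightarrow> r = q"
proof
  assume h: "r + 1/r = q + 1/q"
  have "(r - q) * (r*q - 1) = r*q*((r + 1/r) - (q + 1/q))" using assms by (simp add: field_simps)
  also have "\<dots> = 0" using h by simp
  finally have "(r - q) * (r*q - 1) = 0" .
  moreover have "r*q > 1" using assms by (metis less_trans mult_strict_mono one_less_numeral_iff semiring_norm(76) zero_less_one mult_1_left less_le_not_le mult_less_cancel_right1 one_le_numeral)
  ultimately show "r = q" by simp
qed simp

lemma ln_ratio_iff:
  fixes t t' al X P K R :: real
  assumes "t > 0" "t' > 0" "al > 0" "R > 0" and al: "al = X - 2*P + K"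
    and h1: "al*t*(1+t') = 1 - X" and h2: "al*t'*(1+t) = 1 - K"
  shows "ln ((1+t)*(1+t')/(t*t')) = R \<longleftrightarrow> (1-P)^2 = (cosh (R/2))^2 * (1-X) * (1-K)"
proof -
  define A where "A = (1+t)*(1+t')"
  define B where "B = t*t'"
  have Bp: "B > 0" unfolding B_def using assms by simp
  have AB: "A > B" unfolding A_def B_def using assms by (simp add: algebra_simps)
  have s1: "al*(A+B) = 2*(1-P)" proof -
    have "al*(A+B) = al + al*t*(1+t') + al*t'*(1+t)" unfolding A_def B_def by (simp add: algebra_simps)
    thus ?thesis using h1 h2 al by simp
  qed
  have s2: "(1-X)*(1-K) = al^2*(A*B)" unfolding h1[symmetric] h2[symmetric] A_def B_def
    by (simp add: algebra_simps power2_eq_square)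
  define r where "r = A/B"
  have r1: "r > 1" unfolding r_def using AB Bp by simp
  have q1: "exp R > 1" using assms by simp
  have "(1-P)^2 = (cosh (R/2))^2 * (1-X) * (1-K) \<longleftrightarrow> 4*(1-P)^2 = 4*(cosh (R/2))^2 * ((1-X) * (1-K))"
    by (simp add: mult.assoc)
  also have "\<dots> \<longleftrightarrow> al^2*(A+B)^2 = (exp R + exp (-R) + 2) * (al^2*(A*B))"
  proof -
    have "al^2*(A+B)^2 = (al*(A+B))^2" by (simp add: power_mult_distrib)
    also have "\<dots> = 4*(1-P)^2" unfolding s1 by (simp add: power2_eq_square algebra_simps)
    finally show ?thesis unfolding cosh_half_sq s2 by simp
  qed
  also have "\<dots> \<longleftrightarrow> (A+B)^2 = (exp R + exp (-R) + 2) * (A*B)" using assms by simp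
  also have "\<dots> \<longleftrightarrow> (A+B)^2/(A*B) = exp R + exp (-R) + 2" using Bp AB by (simp add: field_simps)
  also have "(A+B)^2/(A*B) = r + 1/r + 2" unfolding r_def using Bp AB by (simp add: field_simps power2_eq_square)
  also have "r + 1/r + 2 = exp R + exp (-R) + 2 \<longleftrightarrow> r + 1/r = exp R + 1/exp R"
    by (simp add: exp_minus inverse_eq_divide)
  also have "\<dots> \<longleftrightarrow> r = exp R" using recip_inj[OF r1 q1] .
  also have "\<dots> \<longleftrightarrow> ln r = R" using r1 by auto
  finally show ?thesis unfolding r_def A_def B_def by simp
qed

lemma S_quadric:
  fixes c :: "'a::euclidean_space" and R :: real
  assumes c: "norm c < 1" and R: "R > 0"
  shows "{x \<in> ball 0 1. hilbert_dist (ball 0 1) x c = R}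
       = {x. (1 - x\<bullet>c)^2 = (cosh (R/2))^2 * (1 - x\<bullet>x) * (1 - c\<bullet>c)}"
proof -
  have C1: "cosh (R/2) > 1" using cosh_real_ge_1[of "R/2"] cosh_real_one_iff[of "R/2"] R by linarith
  hence C2: "(cosh (R/2))^2 > 1" by (simp add: one_less_power)
  have K1: "1 - c\<bullet>c > 0" using norm_sq_less1[OF c] by (simp add: power2_norm_eq_inner)
  have key: "hilbert_dist (ball 0 1) x c = R \<longleftrightarrow> (1 - x\<bullet>c)^2 = (cosh (R/2))^2 * (1 - x\<bullet>x) * (1 - c\<bullet>c)"
    if x: "norm x < 1" and ne: "x \<noteq> c" for x
  proof -
    obtain t t' where tt: "t>0" "t'>0" "hilbert_dist (ball 0 1) x c = ln ((1+t)*(1+t')/(t*t'))"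
      "(norm (x-c))^2*t*(1+t') = 1 - x\<bullet>x" "(norm (x-c))^2*t'*(1+t) = 1 - c\<bullet>c"
      using hilbert_dist_ball[OF x c ne] by blast
    have al: "(norm (x-c))^2 = x\<bullet>x - 2*(x\<bullet>c) + c\<bullet>c" unfolding power2_norm_eq_inner
      by (simp add: inner_diff_left inner_diff_right inner_commute)
    have alp: "(norm (x-c))^2 > 0" using ne by simp
    show ?thesis unfolding tt(3) by (rule ln_ratio_iff[OF tt(1,2) alp R al tt(4,5)])
  qed
  show ?thesis
  proof (intro set_eqI iffI)
    fix x assume "x \<in> {x \<in> ball 0 1. hilbert_dist (ball 0 1) x c = R}"
    hence x: "norm x < 1" and h: "hilbert_dist (ball 0 1) x c = R" by auto
    have "x \<noteq> c" using h R unfolding hilbert_dist_def by auto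
    thus "x \<in> {x. (1 - x\<bullet>c)^2 = (cosh (R/2))^2 * (1 - x\<bullet>x) * (1 - c\<bullet>c)}"
      using key[OF x] h by simp
  next
    fix x assume "x \<in> {x. (1 - x\<bullet>c)^2 = (cosh (R/2))^2 * (1 - x\<bullet>x) * (1 - c\<bullet>c)}"
    hence q: "(1 - x\<bullet>c)^2 = (cosh (R/2))^2 * (1 - x\<bullet>x) * (1 - c\<bullet>c)" by simp
    have x: "norm x < 1"
    proof (rule ccontr)
      assume "\<not> norm x < 1"
      hence "x\<bullet>x \<ge> 1" by (metis power2_norm_eq_inner not_less one_le_power)
      hence "(cosh (R/2))^2 * (1 - x\<bullet>x) * (1 - c\<bullet>c) \<le> 0"
        using K1 by (simp add: mult_nonneg_nonpos mult_nonpos_nonneg)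
      moreover have "(1 - x\<bullet>c)^2 \<ge> 0" by simp
      ultimately have z1: "(1 - x\<bullet>c)^2 = 0" and z2: "(cosh (R/2))^2 * (1 - x\<bullet>x) * (1 - c\<bullet>c) = 0"
        using q by linarith+
      from z2 K1 have "x\<bullet>x = 1" by simp
      hence nx: "norm x = 1" by (metis norm_eq_sqrt_inner real_sqrt_one)
      from z1 have "x\<bullet>c = 1" by simp
      moreover have "x\<bullet>c \<le> norm x * norm c" by (rule norm_cauchy_schwarz)
      ultimately show False using nx c by simp
    qed
    have "x \<noteq> c"
    proof
      assume "x = c"
      hence "(1 - c\<bullet>c)^2 = (cosh (R/2))^2 * (1 - c\<bullet>c)^2" using q by (simp add: power2_eq_square mult.assoc)
      moreover have "(1 - c\<bullet>c)^2 > 0" using K1 by simp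
      ultimately show False using C2 by simp
    qed
    thus "x \<in> {x \<in> ball 0 1. hilbert_dist (ball 0 1) x c = R}" using key[OF x] q x by simp
  qed
qed


lemma fact_helper: "(T::real)*m*D - m^2*T*U = T*m*(D - m*U)"
  by (simp add: algebra_simps power2_eq_square)

lemma aux_div: "(P::real) \<noteq> 0 \<Longrightarrow> Q \<noteq> 0 \<Longrightarrow> (A/P + B - 1)*P = A + B*P - P"
  by (simp add: field_simps)

lemma ell_poly:
  fixes k z X T D :: real
  assumes T: "T > 0" and k: "k^2 < 1" and D: "D = 1 + T - k^2*T"
  shows "(z - k/D)^2/((1-k^2)^2*T*(1+T)/D^2) + (X - 2*(k*z)/D + k^2/D^2 - (z-k/D)^2)/(T*(1-k^2)/D) = 1
     \<longleftrightarrow> (1 - k*z)^2 = (1+T)*(1-X)*(1-k^2)"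
proof -
  define m where "m = 1 - k^2"
  have k1: "m > 0" using k m_def by simp
  have Dm: "D = 1 + T*m" by (simp add: D m_def algebra_simps)
  hence Dp: "D > 0" using k1 T by (smt (verit) mult_pos_pos)
  have F: "X - 2*(k*z)/D + k^2/D^2 - (z-k/D)^2 = X - z^2"
    using Dp by (simp add: power2_eq_square field_simps)
  have E: "(z - k/D)^2/(m^2*T*(1+T)/D^2) = (D*z - k)^2/(m^2*T*(1+T))"
  proof -
    have e0: "z - k/D = (D*z - k)/D" using Dp by (simp add: field_simps)
    have "m^2*T*(1+T) \<noteq> 0" using k1 T by simp
    thus ?thesis unfolding e0 power_divide using Dp by simp
  qed
  have G: "(X - z^2)/(T*m/D) = (X-z^2)*D/(T*m)" using Dp by simp
  define L where "L = (D*z - k)^2/(m^2*T*(1+T)) + (X-z^2)*D/(T*m)"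
  have L1: "(L - 1) * (m^2*T*(1+T)) = (D*z - k)^2 + (X-z^2)*D*m*(1+T) - m^2*T*(1+T)"
  proof -
    have "m^2*T*(1+T) \<noteq> 0" "T*m \<noteq> 0" using k1 T by auto
    hence "(L - 1) * (m^2*T*(1+T)) = (D*z - k)^2 + ((X-z^2)*D/(T*m))*(m^2*T*(1+T)) - m^2*T*(1+T)"
      unfolding L_def by (rule aux_div)
    also have "((X-z^2)*D/(T*m))*(m^2*T*(1+T)) = (X-z^2)*D*m*(1+T)"
      using k1 T by (simp add: power2_eq_square)
    finally show ?thesis .
  qed
  have L2: "(D*z - k)^2 + (X-z^2)*D*m*(1+T) - m^2*T*(1+T) = D*((1 - k*z)^2 - (1+T)*(1-X)*m)"
    unfolding Dm m_def by (simp add: algebra_simps power2_eq_square)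
  have pos: "m^2*T*(1+T) > 0" using k1 T by simp
  have "L = 1 \<longleftrightarrow> (1 - k*z)^2 = (1+T)*(1-X)*m"
  proof -
    have "L = 1 \<longleftrightarrow> (L - 1) * (m^2*T*(1+T)) = 0" using k1 T by auto
    also have "\<dots> \<longleftrightarrow> (1 - k*z)^2 - (1+T)*(1-X)*m = 0" unfolding L1 L2 using Dp by simp
    finally show ?thesis by simp
  qed
  thus ?thesis unfolding F E[unfolded m_def] G L_def m_def by simp
qed

theorem theorem4p3:
  fixes c :: "'a::euclidean_space" and R :: real
  assumes "c \<in> ball 0 1" and "R > 0"
  defines "S \<equiv> {x \<in> ball 0 1. hilbert_dist (ball 0 1) x c = R}"
    and "D \<equiv> (cosh (R/2))\<^sup>2 - (norm c)\<^sup>2 * (sinh (R/2))\<^sup>2"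
  defines "c' \<equiv> (1 / D) *\<^sub>R c"
    and "a_min \<equiv> (1/2) * ((1 - (norm c)\<^sup>2) * sinh R) / D"
    and "a_max \<equiv> sinh (R/2) * sqrt (1 - (norm c)\<^sup>2) / sqrt D"
  shows "(c \<noteq> 0 \<longrightarrow> S = ellipsoid_rev c' (c /\<^sub>R norm c) a_min a_max)
         \<and> 0 < a_min \<and> a_min \<le> a_max
         \<and> (c = 0 \<longrightarrow> S = sphere 0 (tanh (R/2)))"
proof -
  have cn: "norm c < 1" using assms(1) by simp
  define k where "k = norm c"
  define C where "C = cosh (R/2)"
  define Sh where "Sh = sinh (R/2)"
  define T where "T = Sh^2"
  have Shp: "Sh > 0" unfolding Sh_def using assms(2) by simp
  have Tp: "T > 0" unfolding T_def using Shp by simp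
  have Cp: "C > 0" unfolding C_def by simp
  have C2: "C^2 = 1 + T" unfolding C_def T_def Sh_def by (simp add: cosh_square_eq)
  have k2: "k^2 < 1" unfolding k_def using norm_sq_less1[OF cn] .
  have k0: "k \<ge> 0" unfolding k_def by simp
  have m: "1 - k^2 > 0" using k2 by simp
  have Dd: "D = 1 + T - k^2*T" unfolding D_def using C2 by (simp add: C_def[symmetric] Sh_def[symmetric] T_def[symmetric] k_def[symmetric])
  have "D - 1 = T*(1-k^2)" by (simp add: Dd algebra_simps)
  hence Dp: "D > 0" using m Tp by (smt (verit) mult_pos_pos)
  have sR: "sinh R = 2*Sh*C" unfolding Sh_def C_def using sinh_double[of "R/2"] by simp
  have amin: "a_min = (1-k^2)*Sh*C/D" unfolding a_min_def sR k_def by simp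
  have aminp: "a_min > 0" unfolding amin using m Shp Cp Dp by simp
  have amin2: "a_min^2 = (1-k^2)^2*T*(1+T)/D^2"
    using C2 unfolding amin T_def by (simp add: power_mult_distrib power_divide)
  have amaxp: "a_max > 0" unfolding a_max_def Sh_def[symmetric] k_def[symmetric] using Shp m Dp by simp
  have amax2: "a_max^2 = T*(1-k^2)/D"
    unfolding a_max_def T_def Sh_def[symmetric] k_def[symmetric] using m Dp by (simp add: power_mult_distrib power_divide)
  have "a_max^2 - a_min^2 = T*(1-k^2)*k^2/D^2"
  proof -
    have "T*(1-k^2)/D = T*(1-k^2)*D/D^2" using Dp by (simp add: power2_eq_square)
    hence "a_max^2 - a_min^2 = (T*(1-k^2)*D - (1-k^2)^2*T*(1+T))/D^2"
      unfolding amax2 amin2 by (simp add: diff_divide_distrib)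
    also have "T*(1-k^2)*D - (1-k^2)^2*T*(1+T) = T*(1-k^2)*(D - (1-k^2)*(1+T))"
      by (rule fact_helper)
    also have "D - (1-k^2)*(1+T) = k^2" by (simp add: Dd algebra_simps)
    finally show ?thesis .
  qed
  moreover have "T*(1-k^2)*k^2/D^2 \<ge> 0" using Tp m by simp
  ultimately have "a_min^2 \<le> a_max^2" by linarith
  hence le: "a_min \<le> a_max" by (rule power2_le_imp_le) (rule less_imp_le[OF amaxp])
  have SQ: "S = {x. (1 - x\<bullet>c)^2 = C^2 * (1 - x\<bullet>x) * (1 - c\<bullet>c)}"
    unfolding S_def C_def by (rule S_quadric[OF cn assms(2)])
  have cc: "c\<bullet>c = k^2" unfolding k_def by (simp add: power2_norm_eq_inner)
  have part1: "S = ellipsoid_rev c' (c /\<^sub>R norm c) a_min a_max" if c0: "c \<noteq> 0"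
  proof -
    have kp: "k > 0" unfolding k_def using c0 by simp
    show ?thesis
    proof (intro set_eqI)
      fix x
      define z where "z = (x\<bullet>c)/k"
      have xc: "x\<bullet>c = k*z" unfolding z_def using kp by simp
      have i1: "(x - c')\<bullet>(c /\<^sub>R norm c) = z - k/D"
        unfolding c'_def k_def[symmetric] z_def using kp Dp cc
        by (simp add: inner_diff_left power2_eq_square field_simps)
      have i2: "(norm (x - c'))^2 = x\<bullet>x - 2*(k*z)/D + k^2/D^2"
        unfolding c'_def power2_norm_eq_inner using Dp cc xc
        by (simp add: inner_diff_left inner_diff_right inner_commute power2_eq_square field_simps)
      have "x \<in> ellipsoid_rev c' (c /\<^sub>R norm c) a_min a_max \<longleftrightarrow>
          (z - k/D)^2/((1-k^2)^2*T*(1+T)/D^2) + (x\<bullet>x - 2*(k*z)/D + k^2/D^2 - (z-k/D)^2)/(T*(1-k^2)/D) = 1"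
        unfolding ellipsoid_rev_def mem_Collect_eq i1 i2 amin2 amax2 by simp
      also have "\<dots> \<longleftrightarrow> (1 - k*z)^2 = (1+T)*(1-x\<bullet>x)*(1-k^2)"
        by (rule ell_poly[OF Tp k2 Dd])
      also have "\<dots> \<longleftrightarrow> x \<in> S" unfolding SQ C2 xc[symmetric] cc by simp
      finally show "x \<in> S \<longleftrightarrow> x \<in> ellipsoid_rev c' (c /\<^sub>R norm c) a_min a_max" by simp
    qed
  qed
  have part2: "S = sphere 0 (tanh (R/2))" if c0: "c = 0"
  proof (intro set_eqI)
    fix x
    have th: "tanh (R/2) = Sh/C" unfolding tanh_def Sh_def C_def by simp
    have thp: "Sh/C \<ge> 0" using Shp Cp by simp
    have "x \<in> S \<longleftrightarrow> 1 = C^2 * (1 - x\<bullet>x)" unfolding SQ c0 by simp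
    also have "\<dots> \<longleftrightarrow> C^2 * (x\<bullet>x) = T" using C2 by (auto simp: algebra_simps)
    also have "\<dots> \<longleftrightarrow> x\<bullet>x = T/C^2" using Cp by (simp add: eq_divide_eq mult.commute)
    also have "\<dots> \<longleftrightarrow> (norm x)^2 = (Sh/C)^2" by (simp add: power2_norm_eq_inner power_divide T_def)
    also have "\<dots> \<longleftrightarrow> norm x = Sh/C" using thp by (metis norm_ge_zero power2_eq_iff_nonneg)
    finally show "x \<in> S \<longleftrightarrow> x \<in> sphere 0 (tanh (R/2))" unfolding th by simp
  qed
  show ?thesis using part1 part2 aminp le by blast
qed

end
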